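(* Let $G$ be a finite group. If there exists $g\in G$ whose order is divisible by at least three distinct primes, then $\mathcal{I}(G)=\emptyset$ and the diameter of $\Gamma(G)$ is at most $2$.
   Context: For a finite group $G$, let $\widetilde{\Gamma}(G)$ be the graph with vertex set $G$ in which two distinct elements $x,y$ are adjacent if and only if $|\langle x,y\rangle|$ is divisible by at least three distinct primes. $\mathcal{I}(G)$ denotes the set of isolated vertices of $\widetilde{\Gamma}(G)$, and $\Gamma(G)$ is the subgraph of $\widetilde{\Gamma}(G)$ induced on $G\setminus\mathcal{I}(G)$. *)

theory Defs
  imports "HOL-Algebra.Algebra" "HOL-Computational_Algebra.Primes"
begin

definition tGamma_adj :: "('a, 'b) monoid_scheme \<Rightarrow> 'a \<Rightarrow> 'a \<Rightarrow> bool" where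
  "tGamma_adj G x y \<longleftrightarrow> x \<in> carrier G \<and> y \<in> carrier G \<and> x \<noteq> y \<and>
     card {p::nat. Factorial_Ring.prime p \<and> p dvd card (generate G {x, y})} \<ge> 3"

definition isolated_vertices :: "('a, 'b) monoid_scheme \<Rightarrow> 'a set" where
  "isolated_vertices G = {x \<in> carrier G. \<forall>y \<in> carrier G. \<not> tGamma_adj G x y}"

text \<open>Vertex set of Gamma(G): the induced subgraph of tilde-Gamma(G) on G minus I(G).\<close>
definition Gamma_vertices :: "('a, 'b) monoid_scheme \<Rightarrow> 'a set" where
  "Gamma_vertices G = carrier G - isolated_vertices G"

definition Gamma_diam_le_2 :: "('a, 'b) monoid_scheme \<Rightarrow> bool" where
  "Gamma_diam_le_2 G \<longleftrightarrow> (\<forall>x \<in> Gamma_vertices G. \<forall>y \<in> Gamma_vertices G.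
      x = y \<or> tGamma_adj G x y \<or>
      (\<exists>z \<in> Gamma_vertices G. tGamma_adj G x z \<and> tGamma_adj G z y))"

end

theory Submission
  imports Defs
begin

lemma (in group) ord_dvd_card_gen2:
  assumes "g \<in> carrier G" "x \<in> carrier G"
  shows "ord g dvd card (generate G {x, g})"
proof -
  let ?K = "subgroup_generated G {x, g}"
  have cK: "carrier ?K = generate G {x, g}"
    using assms by (simp add: carrier_subgroup_generated Int_absorb1)
  have sub: "generate G {g} \<subseteq> generate G {x, g}"
    using assms by (intro mono_generate) auto
  have "subgroup (generate G {g}) G"
    using assms by (intro generate_is_subgroup) auto
  hence "subgroup (generate G {g}) ?K"
    using sub cK subgroup_subgroup_generated_iff by auto
  hence "card (rcosets\<^bsub>?K\<^esub> (generate G {g})) * card (generate G {g}) = order ?K"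
    using group.lagrange[OF group_subgroup_generated] by blast
  thus ?thesis using generate_pow_card[OF assms(1)] cK unfolding order_def
    by (metis dvd_triv_right)
qed

lemma adj_g:
  assumes "group G" "finite (carrier G)" "g \<in> carrier G"
    and c: "card {p::nat. Factorial_Ring.prime p \<and> p dvd group.ord G g} \<ge> 3"
    and "x \<in> carrier G" "x \<noteq> g"
  shows "tGamma_adj G x g"
proof -
  interpret group G by fact
  have d: "ord g dvd card (generate G {x, g})" using ord_dvd_card_gen2 assms by blast
  have "generate G {x, g} \<subseteq> carrier G" using assms generate_incl by auto
  hence fin: "finite (generate G {x, g})" using assms(2) finite_subset by blast
  have "\<one>\<^bsub>G\<^esub> \<in> generate G {x, g}" by (rule generate.one)
  hence pos: "card (generate G {x, g}) > 0" using fin card_gt_0_iff by blast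
  define n where "n = card (generate G {x, g})"
  have sub: "{p::nat. Factorial_Ring.prime p \<and> p dvd ord g} \<subseteq> {p::nat. Factorial_Ring.prime p \<and> p dvd n}"
    using d unfolding n_def by (auto intro: dvd_trans)
  have "{p::nat. Factorial_Ring.prime p \<and> p dvd n} \<subseteq> {..n}"
    using pos unfolding n_def by (auto intro: dvd_imp_le)
  hence fin2: "finite {p::nat. Factorial_Ring.prime p \<and> p dvd n}"
    by (rule finite_subset) simp
  have "card {p::nat. Factorial_Ring.prime p \<and> p dvd n} \<ge> 3"
    using card_mono[OF fin2 sub] c by linarith
  hence "card {p::nat. Factorial_Ring.prime p \<and> p dvd card (generate G {x, g})} \<ge> 3"
    unfolding n_def .
  thus ?thesis unfolding tGamma_adj_def using assms(3,5,6) by blast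
qed

lemma tGamma_adj_sym: "tGamma_adj G x y \<Longrightarrow> tGamma_adj G y x"
  unfolding tGamma_adj_def by (auto simp: insert_commute)

theorem lemma2p5:
  fixes G :: "('a, 'b) monoid_scheme"
  assumes "group G" and "finite (carrier G)"
    and "\<exists>g \<in> carrier G. card {p::nat. Factorial_Ring.prime p \<and> p dvd group.ord G g} \<ge> 3"
  shows "isolated_vertices G = {} \<and> Gamma_diam_le_2 G"
proof -
  interpret group G by fact
  obtain g where g: "g \<in> carrier G" and c: "card {p::nat. Factorial_Ring.prime p \<and> p dvd group.ord G g} \<ge> 3"
    using assms(3) by blast
  have adj: "\<And>x. x \<in> carrier G \<Longrightarrow> x \<noteq> g \<Longrightarrow> tGamma_adj G x g"
    using adj_g[OF assms(1,2) g c] by blast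
  have "g \<noteq> \<one>\<^bsub>G\<^esub>"
  proof
    assume "g = \<one>\<^bsub>G\<^esub>"
    hence "group.ord G g = 1" by simp
    hence "{p::nat. Factorial_Ring.prime p \<and> p dvd group.ord G g} = {}" by auto
    hence "card {p::nat. Factorial_Ring.prime p \<and> p dvd group.ord G g} = 0" by (simp only: card.empty)
    thus False using c by linarith
  qed
  hence g1: "tGamma_adj G g \<one>\<^bsub>G\<^esub>" using adj[of "\<one>\<^bsub>G\<^esub>"] tGamma_adj_sym by auto
  have iso: "isolated_vertices G = {}"
  proof -
    have "\<forall>x\<in>carrier G. \<exists>y\<in>carrier G. tGamma_adj G x y"
    proof
      fix x assume x: "x \<in> carrier G"
      show "\<exists>y\<in>carrier G. tGamma_adj G x y"
      proof (cases "x = g")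
        case True thus ?thesis using g1 by (intro bexI[of _ "\<one>\<^bsub>G\<^esub>"]) auto
      next
        case False thus ?thesis using adj[OF x False] g by blast
      qed
    qed
    thus ?thesis unfolding isolated_vertices_def by blast
  qed
  hence V: "Gamma_vertices G = carrier G" unfolding Gamma_vertices_def by simp
  have "Gamma_diam_le_2 G"
    unfolding Gamma_diam_le_2_def V
  proof (intro ballI)
    fix x y assume x: "x \<in> carrier G" and y: "y \<in> carrier G"
    show "x = y \<or> tGamma_adj G x y \<or> (\<exists>z\<in>carrier G. tGamma_adj G x z \<and> tGamma_adj G z y)"
    proof (cases "x = y")
      case False
      show ?thesis
      proof (cases "x = g")
        case True thus ?thesis using adj[OF y] False tGamma_adj_sym by auto
      next
        case xg: False
        show ?thesis
        proof (cases "y = g")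
          case True thus ?thesis using adj[OF x] xg by auto
        next
          case False
          have "tGamma_adj G x g" "tGamma_adj G g y" using adj[OF x xg] adj[OF y False] tGamma_adj_sym by auto
          thus ?thesis using g by blast
        qed
      qed
    qed simp
  qed
  with iso show ?thesis by simp
qed

end
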